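(* Let $X$, $H$, $v=(r,H,s)$ (primitive), $Y$, $a,b,c,d$, $\widetilde H=H/d$, $\gamma=\gamma(\widetilde H)$, $h$, $\widetilde h=h/d$, $K(\widetilde H)\subset K(h)$ be as in the context, and assume $\gcd(c,d\gamma)=1$. Then the canonical identification $$\epsilon:\ N(X)^*/N(X)=T(X)^*/T(X)=T(Y)^*/T(Y)=N(Y)^*/N(Y)$$ is given by $$\epsilon:\ cn\widetilde H^*+k^*+N(X)\ \mapsto\ m(a,b)\,n\,\widetilde h^*+k^*+N(Y)$$ for $n\in\mathbb Z$, $k^*\in K(\widetilde H)^*$ (with $cn\widetilde H^*+k^*\in N(X)^*$), where $m(a,b)$ is an integer with $m(a,b)\equiv-1\pmod{2a}$, $m(a,b)\equiv 1\pmod{2b}$, considered modulo $2ab/d^2$. Equivalently, $\epsilon\big(\kappa(\widetilde H)(cn,k^* )\big)=\kappa(\widetilde h)(m(a,b)n,k^* )$.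
   Context: $X$ is a smooth complex projective K3 surface with Picard lattice $N(X)$ and transcendental lattice $T(X)=N(X)^\perp$ in the unimodular lattice $H^2(X,\mathbb Z)$; similarly for $Y$. For a primitive sublattice $L$ of a unimodular lattice with orthogonal complement $L'$, $L^*/L$ and $L'^*/L'$ are canonically identified via $x^*+L\mapsto y^*+L'$ when $x^*+y^*$ lies in the unimodular lattice. $H\in N(X)$ is a polarization with $H^2=2rs$; $d\in\mathbb N$ with $\widetilde H=H/d$ primitive; $\gamma>0$ with $\widetilde H\cdot N(X)=\gamma\mathbb Z$; $v=(r,H,s)$ is a primitive isotropic Mukai vector for the Mukai pairing $-(u_0v_2+u_2v_0)+u_1\cdot v_1$ on $\mathbb Z\oplus H^2(X,\mathbb Z)\oplus\mathbb Z$; $Y$ is the moduli space of $H$-semistable coherent sheaves on $X$ with Mukai vector $v$ (a K3 surface), with Mukai's Hodge isometry $H^2(Y,\mathbb Z)\cong v^\perp/\mathbb Zv$; this embeds $T(X)$ into $T(Y)$, and when $\gcd(c,d\gamma)=1$ (Mukai) this is an equality $T(X)=T(Y)$ compatible with $H^{2,0}$. $c=\gcd(r,s)$, $a=r/c$, $b=s/c$. $h\in N(Y)$ is the class of $(-a,0,b)$ mod $\mathbb Zv$, $\widetilde h=h/d$ (primitive), $\widetilde H^*=\widetilde H/\widetilde H^2$, $\widetilde h^*=\widetilde h/\widetilde h^2$. $K(\widetilde H)=\widetilde H^\perp\subset N(X)$ is identified with a finite-index sublattice of $K(h)=h^\perp\subset N(Y)$ via $k\mapsto(0,k,0)\bmod\mathbb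 Zv$, so $K(\widetilde H)^*\supset K(h)^*$ and $K(\widetilde H)^*\subset K(h)\otimes\mathbb Q$. For an even lattice $S$ and primitive $P$ with $P^2=2m\ne0$, $P\cdot S=\gamma(P)\mathbb Z$, $K(P)=P^\perp$, $P^*=P/(2m)$, $u^*(P)\in K(P)^*$ with $\gamma(P)P^*+u^*(P)\in S$: $\widetilde K(P)^*=\{(n,k^* )\in\mathbb Z\oplus K(P)^*: n\equiv-\tfrac{2m}{\gamma(P)}(k^*\cdot u^*(P))\pmod{2m/\gamma(P)}\}$ and $\kappa(P)(n,k^* )=nP^*+k^*+S\in S^*/S$. *)

theory Defs
  imports Main "HOL.Rat"
begin

text \<open>Lattice-theoretic model. An integral lattice of rank CARD('n) is modelled as the
 integer points of 'n => rat, with Gram matrix G; rational vectors model L tensor Q.\<close>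

definition vadd :: "('n \<Rightarrow> rat) \<Rightarrow> ('n \<Rightarrow> rat) \<Rightarrow> ('n \<Rightarrow> rat)" where
  "vadd x y = (\<lambda>i. x i + y i)"

definition smul :: "rat \<Rightarrow> ('n \<Rightarrow> rat) \<Rightarrow> ('n \<Rightarrow> rat)" where
  "smul q x = (\<lambda>i. q * x i)"

definition bil :: "('n::finite \<Rightarrow> 'n \<Rightarrow> int) \<Rightarrow> ('n \<Rightarrow> rat) \<Rightarrow> ('n \<Rightarrow> rat) \<Rightarrow> rat" where
  "bil G x y = (\<Sum>i\<in>UNIV. \<Sum>j\<in>UNIV. x i * of_int (G i j) * y j)"

definition intvec :: "('n \<Rightarrow> rat) \<Rightarrow> bool" where
  "intvec x = (\<forall>i. x i \<in> \<int>)"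

definition even_unimodular :: "('n::finite \<Rightarrow> 'n \<Rightarrow> int) \<Rightarrow> bool" where
  "even_unimodular G =
     ((\<forall>i j. G i j = G j i) \<and>
      (\<forall>x. intvec x \<longrightarrow> (\<exists>k::int. bil G x x = 2 * of_int k)) \<and>
      (\<forall>x. (\<forall>y. intvec y \<longrightarrow> bil G x y \<in> \<int>) \<longrightarrow> intvec x))"

definition sublattice :: "('n \<Rightarrow> rat) set \<Rightarrow> bool" where
  "sublattice M = (M \<subseteq> {x. intvec x} \<and> (\<lambda>i. 0) \<in> M \<and>
      (\<forall>x\<in>M. \<forall>y\<in>M. vadd x y \<in> M \<and> smul (-1) x \<in> M))"

definition primitive_sublattice :: "('n \<Rightarrow> rat) set \<Rightarrow> bool" where
  "primitive_sublattice M = (sublattice M \<and>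
      (\<forall>x. intvec x \<longrightarrow> (\<exists>k::int. k \<noteq> 0 \<and> smul (of_int k) x \<in> M) \<longrightarrow> x \<in> M))"

definition nondegenerate_on :: "('n::finite \<Rightarrow> 'n \<Rightarrow> int) \<Rightarrow> ('n \<Rightarrow> rat) set \<Rightarrow> bool" where
  "nondegenerate_on G M = (\<forall>x\<in>M. (\<forall>y\<in>M. bil G x y = 0) \<longrightarrow> x = (\<lambda>i. 0))"

definition prim_vec :: "('n \<Rightarrow> rat) \<Rightarrow> bool" where
  "prim_vec x = (intvec x \<and> (\<forall>q::rat. intvec (smul q x) \<longrightarrow> q \<in> \<int>))"

text \<open>M tensor Q (for a sublattice M) and the dual lattice M^* inside it.\<close>
definition rspan :: "('n \<Rightarrow> rat) set \<Rightarrow> ('n \<Rightarrow> rat) set" where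
  "rspan M = {x. \<exists>k::int. k \<noteq> 0 \<and> smul (of_int k) x \<in> M}"

definition dual :: "('n::finite \<Rightarrow> 'n \<Rightarrow> int) \<Rightarrow> ('n \<Rightarrow> rat) set \<Rightarrow> ('n \<Rightarrow> rat) set" where
  "dual G M = {x \<in> rspan M. \<forall>y\<in>M. bil G x y \<in> \<int>}"

definition orth :: "('n::finite \<Rightarrow> 'n \<Rightarrow> int) \<Rightarrow> ('n \<Rightarrow> rat) set \<Rightarrow> ('n \<Rightarrow> rat) set" where
  "orth G M = {x. intvec x \<and> (\<forall>y\<in>M. bil G x y = 0)}"

definition Kperp :: "('n::finite \<Rightarrow> 'n \<Rightarrow> int) \<Rightarrow> ('n \<Rightarrow> rat) set \<Rightarrow> ('n \<Rightarrow> rat) \<Rightarrow> ('n \<Rightarrow> rat) set" where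
  "Kperp G M P = {x \<in> M. bil G P x = 0}"

text \<open>Mukai lattice Z + L + Z (tensor Q): triples (u0,u1,u2).\<close>
type_synonym 'n mvec = "rat \<times> ('n \<Rightarrow> rat) \<times> rat"

definition mukai :: "('n::finite \<Rightarrow> 'n \<Rightarrow> int) \<Rightarrow> 'n mvec \<Rightarrow> 'n mvec \<Rightarrow> rat" where
  "mukai G u w = (case u of (u0,u1,u2) \<Rightarrow> case w of (w0,w1,w2) \<Rightarrow>
      -(u0 * w2 + u2 * w0) + bil G u1 w1)"

definition mint :: "'n mvec \<Rightarrow> bool" where
  "mint u = (case u of (u0,u1,u2) \<Rightarrow> u0 \<in> \<int> \<and> intvec u1 \<and> u2 \<in> \<int>)"

definition madd :: "'n mvec \<Rightarrow> 'n mvec \<Rightarrow> 'n mvec" where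
  "madd u w = (case u of (u0,u1,u2) \<Rightarrow> case w of (w0,w1,w2) \<Rightarrow>
      (u0 + w0, vadd u1 w1, u2 + w2))"

definition msmul :: "rat \<Rightarrow> 'n mvec \<Rightarrow> 'n mvec" where
  "msmul q u = (case u of (u0,u1,u2) \<Rightarrow> (q * u0, smul q u1, q * u2))"

definition prim_mvec :: "'n mvec \<Rightarrow> bool" where
  "prim_mvec u = (mint u \<and> (\<forall>q::rat. mint (msmul q u) \<longrightarrow> q \<in> \<int>))"

text \<open>The canonical identification
  eps : N(X)^*/N(X) = T(X)^*/T(X) = T(Y)^*/T(Y) = N(Y)^*/N(Y)
 as a relation between representatives: x (in N(X)^*, a rational vector of L) and y
 (a rational Mukai vector orthogonal to v, representing a class of (v^perp/Zv) tensor Q)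
 correspond iff there is t in T(X)^* with x + t in H^2(X,Z) and
 y + (0,t,0) in H^2(Y,Z) = v^perp/Zv, i.e. y + (0,t,0) + q v integral for some rational q.
 Here T(X) is embedded into H^2(Y) by t |-> (0,t,0) mod Zv (Mukai).\<close>
definition eps_rel :: "('n::finite \<Rightarrow> 'n \<Rightarrow> int) \<Rightarrow> ('n \<Rightarrow> rat) set \<Rightarrow> 'n mvec
    \<Rightarrow> ('n \<Rightarrow> rat) \<Rightarrow> 'n mvec \<Rightarrow> bool" where
  "eps_rel G NX v x y = (\<exists>t \<in> dual G (orth G NX).
      intvec (vadd x t) \<and> (\<exists>q::rat. mint (madd (madd y (0, t, 0)) (msmul q v))))"

end

theory Submission imports Defs "HOL-Analysis.Analysis" begin

definition dotp :: "('n::finite \<Rightarrow> rat) \<Rightarrow> ('n \<Rightarrow> rat) \<Rightarrow> rat" where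
  "dotp u y = (\<Sum>i\<in>UNIV. u i * y i)"

definition tv :: "('n::finite \<Rightarrow> rat) \<Rightarrow> rat^'n" where
  "tv f = (\<chi> i. f i)"

lemma dotp_Ints: "intvec u \<Longrightarrow> intvec y \<Longrightarrow> dotp u y \<in> \<int>"
  unfolding dotp_def intvec_def by (intro Ints_sum Ints_mult) auto

lemma bil_Ints: "intvec x \<Longrightarrow> intvec y \<Longrightarrow> bil G x y \<in> \<int>"
  unfolding bil_def intvec_def by (intro Ints_sum Ints_mult) auto

lemma bil_vadd_left: "bil G (vadd x y) z = bil G x z + bil G y z"
  unfolding bil_def vadd_def by (simp add: distrib_right sum.distrib)

lemma bil_vadd_right: "bil G z (vadd x y) = bil G z x + bil G z y"
  unfolding bil_def vadd_def by (simp add: distrib_left sum.distrib)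

lemma bil_smul_left: "bil G (smul q x) z = q * bil G x z"
  unfolding bil_def smul_def by (simp add: sum_distrib_left mult.assoc)

lemma bil_smul_right: "bil G z (smul q x) = q * bil G z x"
  unfolding bil_def smul_def by (simp add: sum_distrib_left mult.assoc mult.left_commute)

lemma bil_sym: "\<forall>i j. G i j = G j i \<Longrightarrow> bil G x y = bil G y x"
  unfolding bil_def by (subst sum.swap) (simp add: ac_simps)

lemma bil_alt: "bil G x y = (\<Sum>j\<in>UNIV. (\<Sum>i\<in>UNIV. x i * of_int (G i j)) * y j)"
  unfolding bil_def by (subst sum.swap) (simp add: sum_distrib_right)

lemma sl_mult:
  assumes "sublattice M" "y \<in> M"
  shows "smul (of_int k) y \<in> M"
proof -
  have nat: "smul (of_nat j) y \<in> M" for j :: nat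
  proof (induct j)
    case 0
    have "smul (of_nat 0) y = (\<lambda>i. 0)" by (simp add: smul_def)
    then show ?case using assms by (simp add: sublattice_def)
  next
    case (Suc j)
    have "smul (of_nat (Suc j)) y = vadd (smul (of_nat j) y) y"
      by (simp add: smul_def vadd_def algebra_simps)
    then show ?case using Suc assms by (simp add: sublattice_def)
  qed
  show ?thesis
  proof (cases "k \<ge> 0")
    case True
    then have "smul (of_int k) y = smul (of_nat (nat k)) y" by simp
    then show ?thesis using nat by simp
  next
    case False
    have "smul (of_int k) y = smul (-1) (smul (of_nat (nat (-k))) y)"
      using False by (simp add: smul_def fun_eq_iff)
    then show ?thesis using nat[of "nat (-k)"] assms by (simp add: sublattice_def)
  qed
qed

lemma Ints_obtain_vec:
  assumes "intvec y"
  obtains z :: "'n \<Rightarrow> int" where "\<And>i. y i = of_int (z i)"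
proof -
  have "\<forall>i. \<exists>k. y i = of_int k" using assms unfolding intvec_def by (auto elim: Ints_cases)
  then obtain z where "\<forall>i. y i = of_int (z i)" by metis
  then show ?thesis by (auto intro: that)
qed

lemma bezout_set:
  fixes z :: "'n \<Rightarrow> int"
  assumes "finite S"
  shows "\<exists>u. (\<Sum>i\<in>S. u i * z i) = Gcd (z ` S)"
  using assms
proof (induct S rule: finite_induct)
  case empty
  then show ?case by simp
next
  case (insert a S)
  obtain u where u: "(\<Sum>i\<in>S. u i * z i) = Gcd (z ` S)" using insert by blast
  obtain p q where pq: "p * z a + q * Gcd (z ` S) = gcd (z a) (Gcd (z ` S))"
    using bezout_int by blast
  define u' where "u' = (\<lambda>i. if i = a then p else q * u i)"
  have "(\<Sum>i\<in>insert a S. u' i * z i) = p * z a + (\<Sum>i\<in>S. u' i * z i)"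
    using insert by (simp add: u'_def)
  also have "(\<Sum>i\<in>S. u' i * z i) = q * (\<Sum>i\<in>S. u i * z i)"
    using insert by (auto simp: u'_def sum_distrib_left mult.assoc intro!: sum.cong)
  finally show ?case using u pq by (auto simp: Gcd_insert)
qed

lemma dotp_vadd: "dotp u (vadd x y) = dotp u x + dotp u y"
  unfolding dotp_def vadd_def by (simp add: distrib_left sum.distrib)

lemma dotp_smul: "dotp u (smul q x) = q * dotp u x"
  unfolding dotp_def smul_def by (simp add: sum_distrib_left mult.left_commute)

lemma dotp_zero: "dotp u (\<lambda>i. 0) = 0"
  unfolding dotp_def by simp

lemma ext_fun_aux:
  fixes M :: "('n::finite \<Rightarrow> rat) set"
  shows "vec.dim (tv ` M) = N \<Longrightarrow> primitive_sublattice M \<Longrightarrow> (\<forall>y\<in>M. dotp \<psi> y \<in> \<int>)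
    \<Longrightarrow> \<exists>\<phi>. intvec \<phi> \<and> (\<forall>y\<in>M. dotp \<phi> y = dotp \<psi> y)"
proof (induct N arbitrary: M \<psi> rule: less_induct)
  case (less N M \<psi>)
  have sl: "sublattice M" and prim: "\<forall>x. intvec x \<longrightarrow> (\<exists>k::int. k \<noteq> 0 \<and> smul (of_int k) x \<in> M) \<longrightarrow> x \<in> M"
    using less.prems(2) by (auto simp: primitive_sublattice_def)
  show ?case
  proof (cases "\<forall>y\<in>M. y = (\<lambda>i. 0)")
    case True
    then show ?thesis by (intro exI[of _ "\<lambda>i. 0"]) (auto simp: intvec_def dotp_def)
  next
    case False
    then obtain y0 where y0M: "y0 \<in> M" and y0nz: "y0 \<noteq> (\<lambda>i. 0)" by auto
    have "intvec y0" using sl y0M by (auto simp: sublattice_def)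
    then obtain z where z: "\<And>i. y0 i = of_int (z i)" using Ints_obtain_vec by metis
    define g where "g = Gcd (range z)"
    obtain u where u: "(\<Sum>i\<in>UNIV. u i * z i) = g" using bezout_set[of UNIV z] unfolding g_def by auto
    have gdvd: "g dvd z i" for i unfolding g_def by (rule Gcd_dvd) auto
    have "\<exists>i. z i \<noteq> 0" using y0nz z by (auto simp: fun_eq_iff)
    then have gnz: "g \<noteq> 0" unfolding g_def by auto
    define m where "m = (\<lambda>i. of_int (z i div g) :: rat)"
    have intm: "intvec m" by (simp add: m_def intvec_def)
    have "smul (of_int g) m = y0"
    proof
      fix i
      have "g * (z i div g) = z i" using gdvd by simp
      then show "smul (of_int g) m i = y0 i" unfolding smul_def m_def z by (metis of_int_mult)
    qed
    then have mM: "m \<in> M" using prim intm gnz y0M by blast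
    define \<phi>0 where "\<phi>0 = (\<lambda>i. of_int (u i) :: rat)"
    have int\<phi>0: "intvec \<phi>0" by (simp add: \<phi>0_def intvec_def)
    have gi: "g * (u i * (z i div g)) = u i * z i" for i
      using gdvd[of i] by (metis dvd_mult_div_cancel mult.left_commute)
    have "g * (\<Sum>i\<in>UNIV. u i * (z i div g)) = (\<Sum>i\<in>UNIV. u i * z i)"
      by (simp add: sum_distrib_left gi)
    then have s1: "(\<Sum>i\<in>UNIV. u i * (z i div g)) = 1" using gnz u by simp
    have \<phi>0m: "dotp \<phi>0 m = 1"
    proof -
      have "dotp \<phi>0 m = of_int (\<Sum>i\<in>UNIV. u i * (z i div g))"
        by (simp add: dotp_def \<phi>0_def m_def)
      then show ?thesis using s1 by simp
    qed
    define M1 where "M1 = {y\<in>M. dotp \<phi>0 y = 0}"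
    have pM1: "primitive_sublattice M1"
      unfolding primitive_sublattice_def sublattice_def
    proof (intro conjI allI impI ballI)
      show "M1 \<subseteq> {x. intvec x}" using sl by (auto simp: M1_def sublattice_def)
      show "(\<lambda>i. 0) \<in> M1" using sl by (auto simp: M1_def sublattice_def dotp_zero)
      fix x y assume "x \<in> M1" "y \<in> M1"
      then show "vadd x y \<in> M1" "smul (-1) x \<in> M1" using sl
        by (auto simp: M1_def sublattice_def dotp_vadd dotp_smul)
    next
      fix x assume ix: "intvec x" and ex: "\<exists>k::int. k \<noteq> 0 \<and> smul (of_int k) x \<in> M1"
      then obtain k :: int where k: "k \<noteq> 0" "smul (of_int k) x \<in> M1" by blast
      then have "x \<in> M" using prim ix by (auto simp: M1_def)
      moreover have "dotp \<phi>0 x = 0" using k by (auto simp: M1_def dotp_smul)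
      ultimately show "x \<in> M1" by (simp add: M1_def)
    qed
    have lt: "vec.dim (tv ` M1) < N"
    proof -
      have sub: "vec.span (tv ` M1) \<subseteq> vec.span (tv ` M)" by (intro vec.span_mono) (auto simp: M1_def)
      define S where "S = {v :: rat^'n. (\<Sum>i\<in>UNIV. \<phi>0 i * v $ i) = 0}"
      have "vec.subspace S" unfolding vec.subspace_def S_def
        by (auto simp: algebra_simps sum.distrib sum_distrib_left[symmetric])
      moreover have "tv ` M1 \<subseteq> S" by (auto simp: S_def M1_def tv_def dotp_def)
      ultimately have "vec.span (tv ` M1) \<subseteq> S" by (intro vec.span_minimal)
      moreover have "tv m \<notin> S" using \<phi>0m by (simp add: S_def tv_def dotp_def)
      moreover have "tv m \<in> vec.span (tv ` M)" using mM by (intro vec.span_base) auto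
      ultimately have "vec.span (tv ` M1) \<subset> vec.span (tv ` M)" using sub by blast
      then show ?thesis using vec.dim_psubset less.prems(1) by blast
    qed
    have "\<forall>y\<in>M1. dotp \<psi> y \<in> \<int>" using less.prems(3) by (auto simp: M1_def)
    then obtain \<phi>1 where int\<phi>1: "intvec \<phi>1" and \<phi>1: "\<forall>y\<in>M1. dotp \<phi>1 y = dotp \<psi> y"
      using less.hyps[OF lt refl pM1] by blast
    define \<beta> where "\<beta> = dotp \<psi> m - dotp \<phi>1 m"
    have \<beta>Z: "\<beta> \<in> \<int>" using less.prems(3) mM dotp_Ints[OF int\<phi>1 intm] unfolding \<beta>_def by auto
    define F where "F = (\<lambda>i. \<phi>1 i + \<beta> * \<phi>0 i)"
    have intF: "intvec F" using int\<phi>1 int\<phi>0 \<beta>Z by (auto simp: intvec_def F_def)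
    have "\<forall>y\<in>M. dotp F y = dotp \<psi> y"
    proof
      fix y assume yM: "y \<in> M"
      have inty: "intvec y" using sl yM by (auto simp: sublattice_def)
      have "dotp \<phi>0 y \<in> \<int>" using dotp_Ints[OF int\<phi>0 inty] .
      then obtain k where k: "dotp \<phi>0 y = of_int k" by (auto elim: Ints_cases)
      define y' where "y' = vadd y (smul (of_int (-k)) m)"
      have "smul (of_int (-k)) m \<in> M" by (rule sl_mult[OF sl mM])
      then have "y' \<in> M" using sl yM unfolding y'_def sublattice_def by blast
      moreover have "dotp \<phi>0 y' = 0" using k \<phi>0m by (simp add: y'_def dotp_vadd dotp_smul)
      ultimately have "dotp \<phi>1 y' = dotp \<psi> y'" using \<phi>1 by (auto simp: M1_def)
      then have e1: "dotp \<phi>1 y - of_int k * dotp \<phi>1 m = dotp \<psi> y - of_int k * dotp \<psi> m"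
        by (simp add: y'_def dotp_vadd dotp_smul)
      have e2: "dotp F y = dotp \<phi>1 y + \<beta> * dotp \<phi>0 y"
        by (simp add: F_def dotp_def algebra_simps sum.distrib sum_distrib_left)
      show "dotp F y = dotp \<psi> y" using e1 e2 k by (simp add: \<beta>_def algebra_simps)
    qed
    then show ?thesis using intF by blast
  qed
qed

lemma half_not_Int: "(1/2::rat) \<notin> \<int>"
proof
  assume "(1/2::rat) \<in> \<int>"
  then obtain k where "(1/2::rat) = of_int k" by (auto elim: Ints_cases)
  then have "(of_int (2*k)::rat) = 1" by simp
  then have "2*k = 1" by linarith
  then show False by presburger
qed

lemma G_inv:
  fixes G :: "'n::finite \<Rightarrow> 'n \<Rightarrow> int"
  assumes eu: "even_unimodular G" and int\<phi>: "intvec \<phi>"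
  shows "\<exists>w. intvec w \<and> (\<forall>z. bil G w z = dotp \<phi> z)"
proof -
  have sd: "\<And>x. (\<forall>y. intvec y \<longrightarrow> bil G x y \<in> \<int>) \<Longrightarrow> intvec x"
    using eu by (simp add: even_unimodular_def)
  define A :: "rat^'n^'n" where "A = (\<chi> j i. of_int (G i j))"
  have Av: "(A *v v) $ j = (\<Sum>i\<in>UNIV. v $ i * of_int (G i j))" for v j
    by (simp add: A_def matrix_vector_mult_def mult.commute)
  have bilA: "bil G (\<lambda>i. v $ i) z = (\<Sum>j\<in>UNIV. (A *v v) $ j * z j)" for v z
    by (simp only: bil_alt Av)
  have inj: "inj ((*v) A)"
  proof (rule injI)
    fix x y assume eq: "A *v x = A *v y"
    define d where "d = (\<lambda>i. (x - y) $ i)"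
    have "A *v (x - y) = 0" using eq by (simp add: matrix_vector_mult_diff_distrib)
    then have b0: "bil G d z = 0" for z unfolding d_def bilA by simp
    have "d i = 0" for i
    proof (rule ccontr)
      assume ne: "d i \<noteq> 0"
      have "intvec (smul (1 / (2 * d i)) d)" by (rule sd) (simp add: bil_smul_left b0)
      then have "(1/(2 * d i)) * d i \<in> \<int>" unfolding intvec_def smul_def by blast
      then have "(1/2::rat) \<in> \<int>" using ne by simp
      then show False using half_not_Int by blast
    qed
    then show "x = y" by (simp add: d_def vec_eq_iff)
  qed
  have "surj ((*v) A)" by (rule vec.linear_inj_imp_surj[OF matrix_vector_mul_linear_gen inj])
  then obtain v where v: "A *v v = (\<chi> j. \<phi> j)" by (metis surjD)
  define w where "w = (\<lambda>i. v $ i)"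
  have bw: "bil G w z = dotp \<phi> z" for z by (simp add: w_def bilA v dotp_def)
  have "intvec w" by (rule sd) (auto simp: bw dotp_Ints int\<phi>)
  then show ?thesis using bw by blast
qed

lemma bil_diff_left: "bil G (\<lambda>i. w i - x i) y = bil G w y - bil G x y"
  unfolding bil_def by (simp add: left_diff_distrib sum_subtractf)

lemma extend:
  fixes G :: "'n::finite \<Rightarrow> 'n \<Rightarrow> int"
  assumes eu: "even_unimodular G" and pNX: "primitive_sublattice NX" and xd: "x \<in> dual G NX"
  shows "\<exists>t\<in>dual G (orth G NX). intvec (vadd x t)"
proof -
  have sym: "\<forall>i j. G i j = G j i" using eu by (simp add: even_unimodular_def)
  have sl: "sublattice NX" using pNX by (simp add: primitive_sublattice_def)
  define \<psi> where "\<psi> = (\<lambda>j. \<Sum>i\<in>UNIV. x i * of_int (G i j))"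
  have d\<psi>: "dotp \<psi> y = bil G x y" for y by (simp add: dotp_def \<psi>_def bil_alt)
  have "\<forall>y\<in>NX. dotp \<psi> y \<in> \<int>" using xd by (simp add: dual_def d\<psi>)
  then obtain \<phi> where int\<phi>: "intvec \<phi>" and \<phi>: "\<forall>y\<in>NX. dotp \<phi> y = dotp \<psi> y"
    using ext_fun_aux[OF refl pNX] by blast
  obtain w where intw: "intvec w" and bw: "\<forall>z. bil G w z = dotp \<phi> z"
    using G_inv[OF eu int\<phi>] by blast
  define t where "t = (\<lambda>i. w i - x i)"
  have xt: "vadd x t = w" by (simp add: vadd_def t_def)
  obtain k :: int where k0: "k \<noteq> 0" and kx: "smul (of_int k) x \<in> NX"
    using xd by (auto simp: dual_def rspan_def)
  have intkx: "intvec (smul (of_int k) x)" using kx sl by (auto simp: sublattice_def)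
  have tperp: "bil G t y = 0" if "y \<in> NX" for y
    using bw \<phi> that d\<psi> by (simp add: t_def bil_diff_left)
  have "smul (of_int k) t \<in> orth G NX"
    unfolding orth_def
  proof (intro CollectI conjI ballI)
    have "smul (of_int k) t = (\<lambda>i. of_int k * w i - smul (of_int k) x i)"
      by (simp add: smul_def t_def fun_eq_iff right_diff_distrib)
    then show "intvec (smul (of_int k) t)" using intw intkx by (auto simp: intvec_def)
    fix y assume "y \<in> NX" then show "bil G (smul (of_int k) t) y = 0" by (simp add: bil_smul_left tperp)
  qed
  then have trs: "t \<in> rspan (orth G NX)" using k0 by (auto simp: rspan_def)
  have "bil G t y \<in> \<int>" if "y \<in> orth G NX" for y
  proof -
    have inty: "intvec y" and yp: "\<forall>z\<in>NX. bil G y z = 0" using that by (auto simp: orth_def)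
    have "bil G y (smul (of_int k) x) = 0" using yp kx by blast
    then have "bil G y x = 0" using k0 by (simp add: bil_smul_right)
    then have "bil G x y = 0" using bil_sym[OF sym] by metis
    then show ?thesis using bil_Ints[OF intw inty] by (simp add: t_def bil_diff_left)
  qed
  then show ?thesis using trs xt intw by (auto simp: dual_def)
qed

theorem proposition2p3p2:
  fixes G :: "'n::finite \<Rightarrow> 'n \<Rightarrow> int"
    and NX :: "('n \<Rightarrow> rat) set"
    and H Ht kst :: "'n \<Rightarrow> rat"
    and r s c a b d g n m :: int
  assumes "card (UNIV :: 'n set) = 22"
    and "even_unimodular G"
    and "primitive_sublattice NX"
    and "nondegenerate_on G NX"
    and "H \<in> NX"
    and "bil G H H > 0"
    and "r > 0"
    and "bil G H H = 2 * of_int r * of_int s"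
    and "d > 0" and "prim_vec Ht" and "H = smul (of_int d) Ht"
    and "g > 0" and "{bil G Ht x | x. x \<in> NX} = {of_int (g * j) | j. True}"
    and "prim_mvec (of_int r, H, of_int s)"
    and "c = gcd r s" and "a = r div c" and "b = s div c"
    and "coprime c (d * g)"
    and "kst \<in> dual G (Kperp G NX Ht)"
    and "vadd (smul (of_int (c * n) / bil G Ht Ht) Ht) kst \<in> dual G NX"
    and "m mod (2 * a) = (-1) mod (2 * a)" and "m mod (2 * b) = 1 mod (2 * b)"
  shows "eps_rel G NX (of_int r, H, of_int s)
           (vadd (smul (of_int (c * n) / bil G Ht Ht) Ht) kst)
           (madd (msmul (of_int (m * n * d) / of_int (2 * a * b)) (- of_int a, (\<lambda>i. 0), of_int b))
                 (0, kst, 0))"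
proof -
  define \<beta> where "\<beta> = of_int (c * n) / bil G Ht Ht"
  define x where "x = vadd (smul \<beta> Ht) kst"
  obtain t where td: "t \<in> dual G (orth G NX)" and intw: "intvec (vadd x t)"
    using extend[OF assms(2) assms(3)] assms(20) unfolding x_def \<beta>_def by blast
  have c0: "c > 0" using assms(7,15) by simp
  have "(0::rat) < of_int (2 * r * s)" using assms(6,8) by simp
  then have "0 < 2 * r * s" by linarith
  then have s0: "s > 0" using assms(7) by (simp add: zero_less_mult_iff)
  have ra: "r = c * a" using assms(15,16) by simp
  have sb: "s = c * b" using assms(15,17) by simp
  have a0: "a > 0" using ra c0 assms(7) by (simp add: zero_less_mult_iff)
  have b0: "b > 0" using sb c0 s0 by (simp add: zero_less_mult_iff)
  have "(2 * a) dvd (m - (-1))" using assms(21) by (simp add: mod_eq_dvd_iff)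
  then obtain j1 where j1: "m + 1 = 2 * a * j1" by (auto elim!: dvdE)
  have "(2 * b) dvd (m - 1)" using assms(22) by (simp add: mod_eq_dvd_iff)
  then obtain j2 where j2: "m - 1 = 2 * b * j2" by (auto elim!: dvdE)
  have HH: "bil G H H = of_int d * of_int d * bil G Ht Ht"
    using assms(11) by (simp add: bil_smul_left bil_smul_right)
  have HtHt: "of_int d * of_int d * bil G Ht Ht = 2 * of_int c * of_int c * of_int a * of_int b"
  proof -
    have "bil G H H = 2 * of_int c * of_int c * of_int a * of_int b"
      using assms(8) ra sb by (simp add: algebra_simps)
    then show ?thesis using HH by simp
  qed
  define q :: rat where "q = of_int (n * d) / of_int (2 * c * a * b)"
  have dnz: "(of_int d :: rat) \<noteq> 0" using assms(9) by simp
  have anz: "(of_int a :: rat) \<noteq> 0" using a0 by simp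
  have bnz: "(of_int b :: rat) \<noteq> 0" using b0 by simp
  have cnz: "(of_int c :: rat) \<noteq> 0" using c0 by simp
  have HtHt': "bil G Ht Ht = 2 * of_int c * of_int c * of_int a * of_int b / (of_int d * of_int d)"
    using HtHt dnz by (simp add: field_simps)
  have \<beta>q: "\<beta> = q * of_int d"
    unfolding \<beta>_def q_def HtHt' using dnz anz bnz cnz by (simp add: field_simps)
  have m1: "(of_int m :: rat) = 2 * of_int a * of_int j1 - 1"
    using arg_cong[OF j1, of "of_int :: int \<Rightarrow> rat"] by simp
  have m2: "(of_int m :: rat) = 2 * of_int b * of_int j2 + 1"
    using arg_cong[OF j2, of "of_int :: int \<Rightarrow> rat"] by simp
  have e1: "of_int (m * n * d) / of_int (2 * a * b) * (- of_int a) + q * of_int r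
      = (of_int (- (n * d * j2)) :: rat)"
    unfolding q_def ra using anz bnz cnz m2 by (simp add: field_simps)
  have e3: "of_int (m * n * d) / of_int (2 * a * b) * (of_int b) + q * of_int s
      = (of_int (n * d * j1) :: rat)"
    unfolding q_def sb using anz bnz cnz by (simp add: field_simps m1)
  have e2: "intvec (vadd (vadd (vadd (smul (of_int (m * n * d) / of_int (2 * a * b)) (\<lambda>i. 0)) kst) t) (smul q H))"
  proof -
    have "vadd (vadd (vadd (smul (of_int (m * n * d) / of_int (2 * a * b)) (\<lambda>i. 0)) kst) t) (smul q H)
       = vadd x t"
      unfolding x_def assms(11) by (simp add: vadd_def smul_def fun_eq_iff \<beta>q algebra_simps)
    then show ?thesis using intw by simp
  qed
  show ?thesis unfolding eps_rel_def
  proof (intro bexI[OF _ td] conjI exI[of _ q])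
    show "intvec (vadd (vadd (smul (of_int (c * n) / bil G Ht Ht) Ht) kst) t)"
      using intw unfolding x_def \<beta>_def .
    have "mint (of_int (m * n * d) / of_int (2 * a * b) * (- of_int a) + q * of_int r,
          vadd (vadd (vadd (smul (of_int (m * n * d) / of_int (2 * a * b)) (\<lambda>i. 0)) kst) t) (smul q H),
          of_int (m * n * d) / of_int (2 * a * b) * (of_int b) + q * of_int s)"
      unfolding mint_def using e1 e2 e3 by simp
    then show "mint (madd (madd (madd (msmul (of_int (m * n * d) / of_int (2 * a * b)) (- of_int a, \<lambda>i. 0, of_int b)) (0, kst, 0)) (0, t, 0))
        (msmul q (of_int r, H, of_int s)))"
      by (simp add: madd_def msmul_def)
  qed
qed

end
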